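(* Let $F$ be a field containing $\mathcal K$ and let $w_1,\dots,w_N:\mathbb C\to F$ be functions with $L(u)w_m(u)=0$ for all $1\le m\le N$, $u\in\mathbb C$, and such that the Casorati determinant $[1,2,\dots,N]$ is nonzero for every $u$. Then for $0\le a\le N$, \[ T^{(a)}_1\Bigl(u+\frac a2\Bigr)=\frac{[0,1,\dots,a-1,a+1,\dots,N]}{[1,2,\dots,N]}. \]
   Context: Fix an integer $n\ge 2$ and put $N=2n+2$. Let $Q_a(u)$ ($1\le a\le n$, $u\in\mathbb C$) be algebraically independent commuting indeterminates, $\mathcal K$ the field of fractions of $\mathbb Z[Q_a(u)^{\pm1}]$. Put $d_a=1+\delta_{an}$, $Y_a(u)=Q_a(u-\frac{d_a}{2})/Q_a(u+\frac{d_a}{2})$ for $1\le a\le n$, $Y_0(u)=1$. Let $J=\{1\prec2\prec\cdots\prec n\prec\bar n\prec\cdots\prec\bar2\prec\bar1\}$. For $1\le a\le n$ set $z_a(u)=\frac{Y_a(u+\frac a2)}{Y_{a-1}(u+\frac{a+1}2)}$, $z_{\bar a}(u)=\frac{Y_{a-1}(u+\frac{2n-a+3}2)}{Y_a(u+\frac{2n-a+4}2)}$; set $x_a(u)=z_a(u)$, $x_{2n+3-a}(u)=z_{\bar a}(u)$ for $1\le a\le n$, and $x_{n+1}(u)=-x_{n+2}(u)=\frac{Q_n(u+\frac n2)Q_n(u+\frac{n+4}2)}{Q_n(u+\frac{n+2}2)^2}$. $D$ is the shift operator ($D\,c(u)=c(u+1)D$); a difference operator $\sum_jc_j(u)D^j$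 acts on $w:\mathbb C\to F$ by $w\mapsto\sum_jc_j(u)w(u+j)$. Define $L(u)=\prod_{i=1}^{N}(x_i(u+n+1-i)-D)$ with factors ordered $i=1,\dots,N$ from left to right. For $1\le a\le n$ define $T^{(a)}_1(u)$ by $T^{(a)}_1(u+\frac12)=\sum z_{i_1}(u+\frac{a-1}2)\cdots z_{i_a}(u-\frac{a-1}2)$, the $k$-th factor being $z_{i_k}(u+\frac{a+1-2k}{2})$, summed over $(i_1,\dots,i_a)\in J^a$ with $i_1\prec\cdots\prec i_a$ such that whenever $i_k=c$, $i_l=\bar c$ ($1\le c\le n$) one has $n+k-l\ge c$. Set $T^{(0)}_1=1$, $T^{(a)}_1=0$ for $a<0$, $T^{(n+1)}_1=0$, and $T^{(a)}_1=-T^{(N-a)}_1$ for $a\ge n+2$ (so $T^{(N)}_1=-1$). Casorati determinants: for integers $i_1,\dots,i_m$ ($m\le N$), $[i_1,\dots,i_m]$ denotes the function $u\mapsto\det\bigl(w_r(u+i_s)\bigr)_{1\le r,s\le m}$. *)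

theory Defs
  imports Complex_Main "Jordan_Normal_Form.Determinant"
begin

text \<open>Algebraic independence over the integers of the family f restricted to the index set I:
  no nonzero integer polynomial (in finitely many distinct variables, coefficients indexed by
  exponent vectors e, finitely supported) vanishes at f.  "F contains K" is rendered as: the
  images of the indeterminates Q_a(u) in F are algebraically independent over Z.\<close>
definition alg_indep_Z :: "('i \<Rightarrow> 'f::field) \<Rightarrow> 'i set \<Rightarrow> bool" where
  "alg_indep_Z f I \<longleftrightarrow>
    (\<forall>(vs :: 'i list) (c :: nat list \<Rightarrow> int).
       distinct vs \<and> set vs \<subseteq> I \<and> finite {e. c e \<noteq> 0} \<and>
       (\<forall>e. c e \<noteq> 0 \<longrightarrow> length e = length vs) \<and>
       (\<Sum>e\<in>{e. c e \<noteq> 0}. of_int (c e) * (\<Prod>j<length vs. f (vs ! j) ^ (e ! j))) = 0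
       \<longrightarrow> (\<forall>e. c e = 0))"

definition dd :: "nat \<Rightarrow> nat \<Rightarrow> complex" where
  "dd n a = (if a = n then 2 else 1)"

definition YY :: "nat \<Rightarrow> (nat \<Rightarrow> complex \<Rightarrow> 'f::field) \<Rightarrow> nat \<Rightarrow> complex \<Rightarrow> 'f" where
  "YY n Q a u = (if a = 0 then 1 else Q a (u - dd n a / 2) / Q a (u + dd n a / 2))"

text \<open>The alphabet J = {1 < ... < n < bar n < ... < bar 1} is encoded as {1..2n}:
  c \<mapsto> c and bar c \<mapsto> 2n+1-c, preserving the order.\<close>
definition zz :: "nat \<Rightarrow> (nat \<Rightarrow> complex \<Rightarrow> 'f::field) \<Rightarrow> nat \<Rightarrow> complex \<Rightarrow> 'f" where
  "zz n Q j u =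
    (if j \<le> n then YY n Q j (u + of_nat j / 2) / YY n Q (j - 1) (u + (of_nat j + 1) / 2)
     else (let a = 2 * n + 1 - j in
           YY n Q (a - 1) (u + (2 * of_nat n - of_nat a + 3) / 2) /
           YY n Q a (u + (2 * of_nat n - of_nat a + 4) / 2)))"

definition xx :: "nat \<Rightarrow> (nat \<Rightarrow> complex \<Rightarrow> 'f::field) \<Rightarrow> nat \<Rightarrow> complex \<Rightarrow> 'f" where
  "xx n Q i u =
    (if i \<le> n then zz n Q i u
     else if i = n + 1 then
       Q n (u + of_nat n / 2) * Q n (u + (of_nat n + 4) / 2) / (Q n (u + (of_nat n + 2) / 2))^2
     else if i = n + 2 then
       - (Q n (u + of_nat n / 2) * Q n (u + (of_nat n + 4) / 2) / (Q n (u + (of_nat n + 2) / 2))^2)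
     else zz n Q (2 * n + 1 - (2 * n + 3 - i)) u)"

text \<open>Action of the product of factors i = k..N (ordered left to right) of
  L(u) = prod_{i=1}^N (x_i(u+n+1-i) - D) on w; the factor (c(u) - D) maps v to
  u \<mapsto> c(u) v(u) - v(u+1).\<close>
fun Lpart :: "nat \<Rightarrow> (nat \<Rightarrow> complex \<Rightarrow> 'f::field) \<Rightarrow> nat \<Rightarrow> nat \<Rightarrow> (complex \<Rightarrow> 'f) \<Rightarrow> complex \<Rightarrow> 'f" where
  "Lpart n Q 0 k w = w"
| "Lpart n Q (Suc m) k w =
     (let v = Lpart n Q m (Suc k) w in
      (\<lambda>u. xx n Q k (u + of_nat n + 1 - of_nat k) * v u - v (u + 1)))"

definition Lop :: "nat \<Rightarrow> (nat \<Rightarrow> complex \<Rightarrow> 'f::field) \<Rightarrow> (complex \<Rightarrow> 'f) \<Rightarrow> complex \<Rightarrow> 'f" where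
  "Lop n Q w = Lpart n Q (2 * n + 2) 1 w"

text \<open>Admissible tableaux for T^(a)_1, 1 \<le> a \<le> n: strictly increasing tuples in J^a
  (0-based positions k, l here; the difference k - l is unchanged).\<close>
definition adm :: "nat \<Rightarrow> nat \<Rightarrow> nat list set" where
  "adm n a = {is. length is = a \<and> sorted_wrt (<) is \<and> set is \<subseteq> {1..2 * n} \<and>
     (\<forall>k<a. \<forall>l<a. \<forall>c. 1 \<le> c \<and> c \<le> n \<and> is ! k = c \<and> is ! l = 2 * n + 1 - c
        \<longrightarrow> int n + int k - int l \<ge> int c)}"

definition TT :: "nat \<Rightarrow> (nat \<Rightarrow> complex \<Rightarrow> 'f::field) \<Rightarrow> nat \<Rightarrow> complex \<Rightarrow> 'f" where
  "TT n Q a v =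
    (if a = 0 then 1
     else if a \<le> n then
       (\<Sum>is\<in>adm n a. \<Prod>k<a. zz n Q (is ! k) ((v - 1/2) + (of_nat a - 1 - 2 * of_nat k) / 2))
     else if a = n + 1 then 0
     else if a \<le> 2 * n + 2 then
       - (if 2 * n + 2 - a = 0 then 1 else
          (\<Sum>is\<in>adm n (2 * n + 2 - a). \<Prod>k<(2 * n + 2 - a).
              zz n Q (is ! k) ((v - 1/2) + (of_nat (2 * n + 2 - a) - 1 - 2 * of_nat k) / 2)))
     else 0)"

text \<open>Casorati determinant [i_1,...,i_m](u) = det (w_r(u+i_s))_{r,s}; w_1..w_m are w 1 .. w m.\<close>
definition casorati :: "(nat \<Rightarrow> complex \<Rightarrow> 'f::field) \<Rightarrow> int list \<Rightarrow> complex \<Rightarrow> 'f" where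
  "casorati w idx u = det (mat (length idx) (length idx)
      (\<lambda>(r, s). w (r + 1) (u + of_int (idx ! s))))"

end

theory Submission
  imports Defs
begin



fun Ef :: "nat \<Rightarrow> (nat \<Rightarrow> complex \<Rightarrow> 'f::field) \<Rightarrow> nat \<Rightarrow> nat \<Rightarrow> int \<Rightarrow> complex \<Rightarrow> 'f" where
  "Ef n Q 0 k s u = (if s = 0 then 1 else 0)"
| "Ef n Q (Suc m) k s u =
     xx n Q k (u + of_nat n + 1 - of_nat k) * Ef n Q m (Suc k) (s - 1) u + Ef n Q m (Suc k) s (u + 1)"

lemma Ef_out: "s < 0 \<or> s > int m \<Longrightarrow> Ef n Q m k s u = 0"
  by (induction m arbitrary: k s u) auto

lemma Ef_zero: "Ef n Q m k 0 u = 1"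
  by (induction m arbitrary: k u) (auto simp: Ef_out)

lemma Ef_right:
  "Ef n Q (Suc m) k s u = Ef n Q m k s u
     + Ef n Q m k (s - 1) u * xx n Q (k + m) (u + of_nat n + 2 - of_nat k - of_int s)"
proof (induction m arbitrary: k s u)
  case 0
  then show ?case by (auto simp: algebra_simps)
next
  case (Suc m)
  have e1: "u + of_nat n + 2 - of_nat (Suc k) - of_int (s - 1) = u + of_nat n + 2 - of_nat k - of_int s"
    by simp
  have e2: "u + 1 + of_nat n + 2 - of_nat (Suc k) - of_int s = u + of_nat n + 2 - of_nat k - of_int s"
    by simp
  show ?case
    apply (subst Ef.simps(2))
    apply (subst Suc.IH)
    apply (subst Suc.IH)
    apply (simp only: Ef.simps(2) e1 e2 Suc_eq_plus1 add.assoc[symmetric])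
    apply (simp add: algebra_simps)
    done
qed

lemma Ef_two:
  "Ef n Q (Suc (Suc m)) k s u =
     Ef n Q m (Suc k) s (u + 1)
   + xx n Q k (u + of_nat n + 1 - of_nat k) * Ef n Q m (Suc k) (s - 1) u
   + Ef n Q m (Suc k) (s - 1) (u + 1) * xx n Q (Suc k + m) (u + of_nat n + 2 - of_nat k - of_int s)
   + xx n Q k (u + of_nat n + 1 - of_nat k) * Ef n Q m (Suc k) (s - 2) u
       * xx n Q (Suc k + m) (u + of_nat n + 2 - of_nat k - of_int s)"
proof -
  have e1: "u + of_nat n + 2 - of_nat (Suc k) - of_int (s - 1) = u + of_nat n + 2 - of_nat k - of_int s"
    by simp
  have e2: "u + 1 + of_nat n + 2 - of_nat (Suc k) - of_int s = u + of_nat n + 2 - of_nat k - of_int s"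
    by simp
  have e3: "s - 1 - 1 = s - 2" by simp
  show ?thesis
    apply (subst Ef.simps(2))
    apply (subst Ef_right)
    apply (subst Ef_right)
    apply (simp only: e1 e2 e3)
    apply (simp add: algebra_simps)
    done
qed

lemma Lpart_Ef:
  "Lpart n Q m k w u = (\<Sum>j\<le>m. (-1)^j * Ef n Q m k (int m - int j) u * w (u + of_nat j))"
proof (induction m arbitrary: k u)
  case 0
  then show ?case by simp
next
  case (Suc m)
  let ?x = "xx n Q k (u + of_nat n + 1 - of_nat k)"
  have "Lpart n Q (Suc m) k w u = ?x * Lpart n Q m (Suc k) w u - Lpart n Q m (Suc k) w (u + 1)"
    by (simp add: Let_def)
  also have "\<dots> = (\<Sum>j\<le>m. ?x * ((-1)^j * Ef n Q m (Suc k) (int m - int j) u * w (u + of_nat j)))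
       - (\<Sum>j\<le>m. (-1)^j * Ef n Q m (Suc k) (int m - int j) (u+1) * w (u + 1 + of_nat j))"
    by (simp add: Suc.IH sum_distrib_left)
  also have "(\<Sum>j\<le>m. ?x * ((-1)^j * Ef n Q m (Suc k) (int m - int j) u * w (u + of_nat j)))
     = (\<Sum>j\<le>Suc m. ?x * ((-1)^j * Ef n Q m (Suc k) (int (Suc m) - int j - 1) u * w (u + of_nat j)))"
    by (simp add: Ef_out)
  also have "(\<Sum>j\<le>m. (-1)^j * Ef n Q m (Suc k) (int m - int j) (u+1) * w (u + 1 + of_nat j))
     = (\<Sum>j\<le>Suc m. - ((-1)^j * Ef n Q m (Suc k) (int (Suc m) - int j) (u+1) * w (u + of_nat j)))"
    apply (subst sum.atMost_Suc_shift[of _ m])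
    apply (simp add: Ef_out add_ac)
    done
  also have "(\<Sum>j\<le>Suc m. ?x * ((-1)^j * Ef n Q m (Suc k) (int (Suc m) - int j - 1) u * w (u + of_nat j)))
      - (\<Sum>j\<le>Suc m. - ((-1)^j * Ef n Q m (Suc k) (int (Suc m) - int j) (u+1) * w (u + of_nat j)))
      = (\<Sum>j\<le>Suc m. (-1)^j * Ef n Q (Suc m) k (int (Suc m) - int j) u * w (u + of_nat j))"
    unfolding sum_subtractf[symmetric]
    by (rule sum.cong) (simp_all add: algebra_simps)
  finally show ?case .
qed




definition G :: "nat \<Rightarrow> (nat \<Rightarrow> complex \<Rightarrow> 'f::field) \<Rightarrow> nat \<Rightarrow> int \<Rightarrow> complex \<Rightarrow> 'f" where
  "G n Q k s u = Ef n Q (2 * (n + 1 - k) + 2) k s u"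

definition Pk :: "nat \<Rightarrow> (nat \<Rightarrow> complex \<Rightarrow> 'f::field) \<Rightarrow> nat \<Rightarrow> bool" where
  "Pk n Q k \<longleftrightarrow> (\<forall>j u. G n Q k (int (n + 1 - k) + 1 + j) u =
     - (YY n Q (k - 1) (u + (2 * of_nat n + 3 - of_nat k) / 2 - of_int j)
        / YY n Q (k - 1) (u + (2 * of_nat n + 3 - of_nat k) / 2))
     * G n Q k (int (n + 1 - k) + 1 - j) (u - of_int j))"

lemma YY_nz:
  assumes Qnz: "\<And>b u. 1 \<le> b \<Longrightarrow> b \<le> n \<Longrightarrow> Q b u \<noteq> 0" and "a \<le> n"
  shows "YY n Q a u \<noteq> 0"
  using assms by (auto simp: YY_def)

lemma alg_field:
  fixes A0 A1 Amj A1mj B12 B12mj g1 g2 g3 g4 :: "'f::field"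
  assumes "A0 \<noteq> 0" "A1 \<noteq> 0" "Amj \<noteq> 0" "A1mj \<noteq> 0" "B12 \<noteq> 0" "B12mj \<noteq> 0"
  shows "- (Amj / A1) * g1 + (A0 / B12) * (- (Amj / A0) * g2) + (- (A1mj / A1) * g3) * (B12mj / A1mj)
     + (A0 / B12) * (- (A1mj / A0) * g4) * (B12mj / A1mj)
   = - (B12mj / B12) * (g4 + (Amj / B12mj) * g2 + g3 * (B12 / A1) + (Amj / B12mj) * g1 * (B12 / A1))"
  using assms by (simp add: field_simps)

lemma X_eq:
  assumes "1 \<le> k" "k \<le> n"
  shows "xx n Q k (v + of_nat n + 1 - of_nat k) =
    YY n Q k (v + of_nat n + 1 - of_nat k / 2) / YY n Q (k - 1) (v + of_nat n + 1 - of_nat k / 2 + 1/2)"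
proof -
  have a1: "v + of_nat n + 1 - of_nat k + of_nat k / 2 = v + of_nat n + 1 - (of_nat k / 2 :: complex)"
    by (simp add: field_simps)
  have a2: "v + of_nat n + 1 - of_nat k + (of_nat k + 1) / 2 = v + of_nat n + 1 - of_nat k / 2 + (1/2 :: complex)"
    by (simp add: field_simps)
  show ?thesis using assms unfolding xx_def zz_def by (simp add: a1 a2)
qed

lemma Z_eq:
  assumes "1 \<le> k" "k \<le> n"
  shows "xx n Q (Suc k + (2 * (n + 1 - Suc k) + 2)) w =
    YY n Q (k - 1) (w + (2 * of_nat n - of_nat k + 3) / 2) / YY n Q k (w + (2 * of_nat n - of_nat k + 4) / 2)"
proof -
  have i: "Suc k + (2 * (n + 1 - Suc k) + 2) = 2 * n + 3 - k" using assms by simp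
  have j: "2 * n + 1 - (2 * n + 3 - (2 * n + 3 - k)) = 2 * n + 1 - k" using assms by simp
  have a: "2 * n + 1 - (2 * n + 1 - k) = k" using assms by simp
  have c: "of_nat (2 * n + 1 - k) = (2 * of_nat n + 1 - of_nat k :: complex)"
    using assms by (simp add: of_nat_diff)
  have x: "xx n Q (2 * n + 3 - k) w = zz n Q (2 * n + 1 - k) w"
  proof -
    have "\<not> (2 * n + 3 - k \<le> n)" "2 * n + 3 - k \<noteq> n + 1" "2 * n + 3 - k \<noteq> n + 2"
      using assms by auto
    then show ?thesis unfolding xx_def by (simp only: if_False j)
  qed
  have z: "zz n Q (2 * n + 1 - k) w = YY n Q (k - 1) (w + (2 * of_nat n - of_nat k + 3) / 2) / YY n Q k (w + (2 * of_nat n - of_nat k + 4) / 2)"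
  proof -
    have "\<not> (2 * n + 1 - k \<le> n)" using assms by auto
    then have "zz n Q (2 * n + 1 - k) w = YY n Q (k - 1) (w + (2 * of_nat n - of_nat k + 3) / 2) / YY n Q k (w + (2 * of_nat n - of_nat k + 4) / 2)"
      unfolding zz_def by (simp only: if_False a Let_def)
    then show ?thesis .
  qed
  show ?thesis unfolding i x z ..
qed




lemma P_step:
  assumes Qnz: "\<And>b u. 1 \<le> b \<Longrightarrow> b \<le> n \<Longrightarrow> Q b u \<noteq> 0"
    and k1: "1 \<le> k" and kn: "k \<le> n" and IH: "Pk n Q (Suc k)"
  shows "Pk n Q k"
  unfolding Pk_def
proof (intro allI)
  fix j :: int and u :: complex
  define m where "m = 2 * (n + 1 - Suc k) + 2"
  define r where "r = int (n + 1 - k)"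
  define p where "p = u + of_nat n + 1 - of_nat k / (2::complex)"
  define a0 where "a0 = YY n Q k p"
  define a1 where "a1 = YY n Q k (p + 1)"
  define amj where "amj = YY n Q k (p - of_int j)"
  define a1mj where "a1mj = YY n Q k (p + 1 - of_int j)"
  define b12 where "b12 = YY n Q (k - 1) (p + 1/2)"
  define b12mj where "b12mj = YY n Q (k - 1) (p + 1/2 - of_int j)"
  define g1 where "g1 = Ef n Q m (Suc k) (r - j - 1) (u - of_int j)"
  define g2 where "g2 = Ef n Q m (Suc k) (r - j) (u - of_int j)"
  define g3 where "g3 = Ef n Q m (Suc k) (r - j) (u - of_int j + 1)"
  define g4 where "g4 = Ef n Q m (Suc k) (r - j + 1) (u - of_int j + 1)"
  have nz: "a0 \<noteq> 0" "a1 \<noteq> 0" "amj \<noteq> 0" "a1mj \<noteq> 0" "b12 \<noteq> 0" "b12mj \<noteq> 0"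
    unfolding a0_def a1_def amj_def a1mj_def b12_def b12mj_def
    using YY_nz[OF Qnz] kn by auto
  have Gk: "\<And>s v. G n Q k s v = Ef n Q (Suc (Suc m)) k s v"
    unfolding G_def m_def using k1 kn by (simp add: Suc_diff_le)
  have rr: "int (n + 1 - Suc k) + 1 = r" unfolding r_def using kn by simp
  have cc: "(2 * of_nat n + 3 - of_nat (Suc k)) / 2 = p - u"
    unfolding p_def by (simp add: field_simps)
  have IHc: "\<And>j' v. Ef n Q m (Suc k) (r + j') v =
      - (YY n Q k (v + (p - u) - of_int j') / YY n Q k (v + (p - u))) * Ef n Q m (Suc k) (r - j') (v - of_int j')"
  proof -
    fix j' v
    from IH[unfolded Pk_def, rule_format, of j' v]
    show "Ef n Q m (Suc k) (r + j') v =
      - (YY n Q k (v + (p - u) - of_int j') / YY n Q k (v + (p - u))) * Ef n Q m (Suc k) (r - j') (v - of_int j')"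
      unfolding G_def m_def[symmetric] rr cc by (simp add: add.assoc)
  qed
  have h1: "Ef n Q m (Suc k) (r + 1 + j) (u + 1) = - (amj / a1) * g1"
  proof -
    have "Ef n Q m (Suc k) (r + (j + 1)) (u + 1) =
      - (YY n Q k (u + 1 + (p - u) - of_int (j + 1)) / YY n Q k (u + 1 + (p - u))) * Ef n Q m (Suc k) (r - (j + 1)) (u + 1 - of_int (j + 1))"
      by (rule IHc)
    moreover have "u + 1 + (p - u) - of_int (j + 1) = p - of_int j" by simp
    moreover have "u + 1 + (p - u) = p + 1" by simp
    moreover have "r - (j + 1) = r - j - 1" by simp
    moreover have "u + 1 - of_int (j + 1) = u - of_int j" by simp
    moreover have "r + (j + 1) = r + 1 + j" by simp
    ultimately show ?thesis unfolding amj_def a1_def g1_def by simp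
  qed
  have h2: "Ef n Q m (Suc k) (r + 1 + j - 1) u = - (amj / a0) * g2"
  proof -
    have "Ef n Q m (Suc k) (r + j) u =
      - (YY n Q k (u + (p - u) - of_int j) / YY n Q k (u + (p - u))) * Ef n Q m (Suc k) (r - j) (u - of_int j)"
      by (rule IHc)
    moreover have "u + (p - u) - of_int j = p - of_int j" by simp
    moreover have "u + (p - u) = p" by simp
    moreover have "r + 1 + j - 1 = r + j" by simp
    ultimately show ?thesis unfolding amj_def a0_def g2_def by simp
  qed
  have h3: "Ef n Q m (Suc k) (r + 1 + j - 1) (u + 1) = - (a1mj / a1) * g3"
  proof -
    have "Ef n Q m (Suc k) (r + j) (u + 1) =
      - (YY n Q k (u + 1 + (p - u) - of_int j) / YY n Q k (u + 1 + (p - u))) * Ef n Q m (Suc k) (r - j) (u + 1 - of_int j)"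
      by (rule IHc)
    moreover have "u + 1 + (p - u) - of_int j = p + 1 - of_int j" by simp
    moreover have "u + 1 + (p - u) = p + 1" by simp
    moreover have "u + 1 - of_int j = u - of_int j + 1" by simp
    moreover have "r + 1 + j - 1 = r + j" by simp
    ultimately show ?thesis unfolding a1mj_def a1_def g3_def by simp
  qed
  have h4: "Ef n Q m (Suc k) (r + 1 + j - 2) u = - (a1mj / a0) * g4"
  proof -
    have i: "Ef n Q m (Suc k) (r + (j - 1)) u =
      - (YY n Q k (u + (p - u) - of_int (j - 1)) / YY n Q k (u + (p - u))) * Ef n Q m (Suc k) (r - (j - 1)) (u - of_int (j - 1))"
      by (rule IHc)
    have e1: "u + (p - u) - of_int (j - 1) = p + 1 - of_int j" by simp
    have e2: "u + (p - u) = p" by simp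
    have e3: "u - of_int (j - 1) = u - of_int j + 1" by simp
    have e4: "r - (j - 1) = r - j + 1" by simp
    have e5: "r + 1 + j - 2 = r + (j - 1)" by simp
    have e6: "p - (of_int j - 1) = p + 1 - of_int j" by simp
    show ?thesis using i unfolding e1 e2 e3 e4 e5 a1mj_def a0_def g4_def by (simp add: e6)
  qed
  have Xu: "xx n Q k (u + of_nat n + 1 - of_nat k) = a0 / b12"
    unfolding X_eq[OF k1 kn] a0_def b12_def p_def ..
  have Xuj: "xx n Q k (u - of_int j + of_nat n + 1 - of_nat k) = amj / b12mj"
  proof -
    have e1: "u - of_int j + of_nat n + 1 - of_nat k / 2 = p - of_int j"
      unfolding p_def by simp
    have e2: "p - of_int j + 1/2 = p + 1/2 - of_int j" by simp
    show ?thesis unfolding X_eq[OF k1 kn] amj_def b12mj_def e1 e2 ..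
  qed
  have sL: "u + of_nat n + 2 - of_nat k - of_int (r + 1 + j) = u - of_int j"
    unfolding r_def using kn by (simp add: of_nat_diff)
  have Zl: "xx n Q (Suc k + m) (u + of_nat n + 2 - of_nat k - of_int (r + 1 + j)) = b12mj / a1mj"
  proof -
    have e1: "u - of_int j + (2 * of_nat n - of_nat k + 3) / 2 = p + 1/2 - of_int j"
      unfolding p_def by (simp add: field_simps)
    have e2: "u - of_int j + (2 * of_nat n - of_nat k + 4) / 2 = p + 1 - of_int j"
      unfolding p_def by (simp add: field_simps)
    show ?thesis unfolding sL m_def Z_eq[OF k1 kn] b12mj_def a1mj_def e1 e2 ..
  qed
  have Zr: "xx n Q (Suc k + m) (u - of_int j + of_nat n + 2 - of_nat k - of_int (r + 1 - j)) = b12 / a1"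
  proof -
    have e: "u - of_int j + of_nat n + 2 - of_nat k - of_int (r + 1 - j) = u"
      unfolding r_def using kn by (simp add: of_nat_diff)
    have e1: "u + (2 * of_nat n - of_nat k + 3) / 2 = p + 1/2"
      unfolding p_def by (simp add: field_simps)
    have e2: "u + (2 * of_nat n - of_nat k + 4) / 2 = p + 1"
      unfolding p_def by (simp add: field_simps)
    show ?thesis unfolding e m_def Z_eq[OF k1 kn] b12_def a1_def e1 e2 ..
  qed
  have rho: "YY n Q (k - 1) (u + (2 * of_nat n + 3 - of_nat k) / 2 - of_int j) = b12mj"
     "YY n Q (k - 1) (u + (2 * of_nat n + 3 - of_nat k) / 2) = b12"
  proof -
    have "u + (2 * of_nat n + 3 - of_nat k) / 2 - of_int j = p + 1/2 - of_int j"
      "u + (2 * of_nat n + 3 - of_nat k) / 2 = p + 1/2"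
      unfolding p_def by (simp_all add: field_simps)
    then show "YY n Q (k - 1) (u + (2 * of_nat n + 3 - of_nat k) / 2 - of_int j) = b12mj"
     "YY n Q (k - 1) (u + (2 * of_nat n + 3 - of_nat k) / 2) = b12"
      unfolding b12mj_def b12_def by simp_all
  qed
  have R: "G n Q k (int (n + 1 - k) + 1 - j) (u - of_int j) =
      g4 + (amj / b12mj) * g2 + g3 * (b12 / a1) + (amj / b12mj) * g1 * (b12 / a1)"
  proof -
    have "G n Q k (int (n + 1 - k) + 1 - j) (u - of_int j) = G n Q k (r + 1 - j) (u - of_int j)"
      unfolding r_def ..
    also have "\<dots> = Ef n Q m (Suc k) (r + 1 - j) (u - of_int j + 1)
       + xx n Q k (u - of_int j + of_nat n + 1 - of_nat k) * Ef n Q m (Suc k) (r + 1 - j - 1) (u - of_int j)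
       + Ef n Q m (Suc k) (r + 1 - j - 1) (u - of_int j + 1) * xx n Q (Suc k + m) (u - of_int j + of_nat n + 2 - of_nat k - of_int (r + 1 - j))
       + xx n Q k (u - of_int j + of_nat n + 1 - of_nat k) * Ef n Q m (Suc k) (r + 1 - j - 2) (u - of_int j)
           * xx n Q (Suc k + m) (u - of_int j + of_nat n + 2 - of_nat k - of_int (r + 1 - j))"
      unfolding Gk by (rule Ef_two)
    also have "\<dots> = g4 + (amj / b12mj) * g2 + g3 * (b12 / a1) + (amj / b12mj) * g1 * (b12 / a1)"
    proof -
      have e1: "r + 1 - j - 1 = r - j" and e2: "r + 1 - j - 2 = r - j - 1" and e3: "r + 1 - j = r - j + 1"
        by simp_all
      show ?thesis unfolding Xuj Zr unfolding g1_def g2_def g3_def g4_def e1 e2 e3 by (simp add: algebra_simps)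
    qed
    finally show ?thesis .
  qed
  have L: "G n Q k (int (n + 1 - k) + 1 + j) u =
      - (amj / a1) * g1 + (a0 / b12) * (- (amj / a0) * g2) + (- (a1mj / a1) * g3) * (b12mj / a1mj)
     + (a0 / b12) * (- (a1mj / a0) * g4) * (b12mj / a1mj)"
  proof -
    have "G n Q k (int (n + 1 - k) + 1 + j) u = G n Q k (r + 1 + j) u"
      unfolding r_def ..
    also have "\<dots> = Ef n Q m (Suc k) (r + 1 + j) (u + 1)
       + xx n Q k (u + of_nat n + 1 - of_nat k) * Ef n Q m (Suc k) (r + 1 + j - 1) u
       + Ef n Q m (Suc k) (r + 1 + j - 1) (u + 1) * xx n Q (Suc k + m) (u + of_nat n + 2 - of_nat k - of_int (r + 1 + j))
       + xx n Q k (u + of_nat n + 1 - of_nat k) * Ef n Q m (Suc k) (r + 1 + j - 2) u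
           * xx n Q (Suc k + m) (u + of_nat n + 2 - of_nat k - of_int (r + 1 + j))"
      unfolding Gk by (rule Ef_two)
    also have "\<dots> = - (amj / a1) * g1 + (a0 / b12) * (- (amj / a0) * g2) + (- (a1mj / a1) * g3) * (b12mj / a1mj)
     + (a0 / b12) * (- (a1mj / a0) * g4) * (b12mj / a1mj)"
      unfolding h1 h2 h3 h4 Xu Zl by simp
    finally show ?thesis .
  qed
  show "G n Q k (int (n + 1 - k) + 1 + j) u =
     - (YY n Q (k - 1) (u + (2 * of_nat n + 3 - of_nat k) / 2 - of_int j)
        / YY n Q (k - 1) (u + (2 * of_nat n + 3 - of_nat k) / 2))
     * G n Q k (int (n + 1 - k) + 1 - j) (u - of_int j)"
    unfolding L R rho by (rule alg_field[OF nz])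
qed




lemma cc_prod:
  assumes nz: "\<And>x. Q n x \<noteq> 0" and n1: "1 \<le> n"
  shows "xx n Q (n + 1) t * xx n Q (n + 1) (t - 1) =
    YY n Q n (t + of_nat n / 2) / YY n Q n (t + of_nat n / 2 + 1)"
proof -
  define s where "s = t + of_nat n / 2"
  have c1: "xx n Q (n + 1) t = Q n s * Q n (s + 2) / (Q n (s + 1))^2"
  proof -
    have "t + (of_nat n + 4) / 2 = s + 2" "t + (of_nat n + 2) / 2 = s + 1" "t + of_nat n / 2 = s"
      unfolding s_def by (simp_all add: field_simps)
    then show ?thesis unfolding xx_def by simp
  qed
  have c2: "xx n Q (n + 1) (t - 1) = Q n (s - 1) * Q n (s + 1) / (Q n s)^2"
  proof -
    have xv: "xx n Q (n + 1) v = Q n (v + of_nat n / 2) * Q n (v + (of_nat n + 4) / 2) / (Q n (v + (of_nat n + 2) / 2))^2" for v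
      unfolding xx_def by simp
    have e1: "t - 1 + (of_nat n + 4) / 2 = s + 1" and e2: "t - 1 + (of_nat n + 2) / 2 = s"
      and e3: "t - 1 + of_nat n / 2 = s - 1"
      unfolding s_def by (simp_all add: field_simps)
    show ?thesis unfolding xv e1 e2 e3 ..
  qed
  have c3: "YY n Q n (t + of_nat n / 2) = Q n (s - 1) / Q n (s + 1)"
    using n1 unfolding YY_def dd_def s_def by simp
  have c4: "YY n Q n (t + of_nat n / 2 + 1) = Q n s / Q n (s + 2)"
  proof -
    have "s + 1 - 1 = s" "s + 1 + 1 = s + 2" "(2::complex) + s = s + 2" by simp_all
    then show ?thesis using n1 unfolding YY_def dd_def s_def[symmetric] by (simp add: add.commute)
  qed
  show ?thesis unfolding c1 c2 c3 c4 using nz by (simp add: field_simps power2_eq_square)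
qed

lemma G_base:
  "G n Q (n + 1) s u = (if s = 0 then 1 else if s = 2 then - (xx n Q (n + 1) u * xx n Q (n + 1) (u - 1)) else 0)"
proof -
  have m: "2 * (n + 1 - (n + 1)) + 2 = Suc (Suc 0)" by simp
  have x2: "\<And>v. xx n Q (Suc (Suc n)) v = - xx n Q (n + 1) v"
    unfolding xx_def by simp
  have a1: "u + of_nat n + 1 - of_nat (n + 1) = u" by simp
  have a2: "u + of_nat n + 1 - of_nat (Suc (Suc n)) = u - 1" by simp
  have a3: "u + 1 + of_nat n + 1 - of_nat (Suc (Suc n)) = u" by simp
  show ?thesis unfolding G_def m
    by (simp add: a1 a2 a3 x2)
qed




lemma G_base':
  "G n Q (Suc n) s u = (if s = 0 then 1 else if s = 2 then - (xx n Q (Suc n) u * xx n Q (Suc n) (u - 1)) else 0)"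
  using G_base[of n Q s u] by simp

lemma P_base:
  assumes nz: "\<And>b x. 1 \<le> b \<Longrightarrow> b \<le> n \<Longrightarrow> Q b x \<noteq> 0" and n1: "1 \<le> n"
  shows "Pk n Q (n + 1)"
  unfolding Pk_def
proof (intro allI)
  fix j :: int and u :: complex
  have nzn: "\<And>x. Q n x \<noteq> 0" using nz n1 by auto
  let ?c = "\<lambda>t. xx n Q (n + 1) t"
  have e0: "n + 1 - 1 = n" "int (n + 1 - (n + 1)) = 0" by simp_all
  have e1: "(2 * of_nat n + 3 - of_nat (n + 1)) / 2 = of_nat n / 2 + (1::complex)"
    by (simp add: field_simps)
  have YYnz: "\<And>x. YY n Q n x \<noteq> 0" using YY_nz[OF nz] by auto
  show "G n Q (n + 1) (int (n + 1 - (n + 1)) + 1 + j) u =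
     - (YY n Q (n + 1 - 1) (u + (2 * of_nat n + 3 - of_nat (n + 1)) / 2 - of_int j) /
        YY n Q (n + 1 - 1) (u + (2 * of_nat n + 3 - of_nat (n + 1)) / 2)) *
     G n Q (n + 1) (int (n + 1 - (n + 1)) + 1 - j) (u - of_int j)"
    unfolding e0 e1
  proof -
    consider "j = 1" | "j = -1" | "j = 0" | "j \<noteq> 1 \<and> j \<noteq> -1 \<and> j \<noteq> 0" by blast
    then show "G n Q (n + 1) (0 + 1 + j) u =
      - (YY n Q n (u + (of_nat n / 2 + 1) - of_int j) / YY n Q n (u + (of_nat n / 2 + 1))) *
      G n Q (n + 1) (0 + 1 - j) (u - of_int j)"
    proof cases
      case 1
      have a: "u + (of_nat n / 2 + 1) - of_int j = u + of_nat n / 2" "u + (of_nat n / 2 + 1) = u + of_nat n / 2 + 1"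
        using 1 by simp_all
      show ?thesis unfolding a using 1 cc_prod[where Q=Q and n=n, OF nzn n1, of u] by (simp add: G_base')
    next
      case 2
      have a: "u + (of_nat n / 2 + 1) - of_int j = u + 1 + of_nat n / 2 + 1" "u + (of_nat n / 2 + 1) = u + 1 + of_nat n / 2"
        "u - of_int j = u + 1" "u + 1 - 1 = u"
        using 2 by simp_all
      have cp: "?c (u + 1) * ?c u = YY n Q n (u + 1 + of_nat n / 2) / YY n Q n (u + 1 + of_nat n / 2 + 1)"
        using cc_prod[where Q=Q and n=n, OF nzn n1, of "u + 1"] by simp
      show ?thesis unfolding a using 2 cp YYnz by (simp add: G_base')
    next
      case 3
      then show ?thesis by (simp add: G_base')
    next
      case 4
      then have "0 + 1 + j \<noteq> 0" "0 + 1 + j \<noteq> 2" "0 + 1 - j \<noteq> 0" "0 + 1 - j \<noteq> 2" by auto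
      then show ?thesis by (simp add: G_base')
    qed
  qed
qed

lemma P_all:
  assumes nz: "\<And>b x. 1 \<le> b \<Longrightarrow> b \<le> n \<Longrightarrow> Q b x \<noteq> 0" and n1: "1 \<le> n"
  shows "i \<le> n \<Longrightarrow> Pk n Q (n + 1 - i)"
proof (induction i)
  case 0
  then show ?case using P_base[OF nz n1] by simp
next
  case (Suc i)
  have "Pk n Q (Suc (n + 1 - Suc i))" using Suc by (simp add: Suc_diff_le)
  then show ?case using P_step[where Q=Q and n=n and k="n + 1 - Suc i", OF nz] Suc.prems by simp
qed

lemma P_one:
  assumes nz: "\<And>b x. 1 \<le> b \<Longrightarrow> b \<le> n \<Longrightarrow> Q b x \<noteq> 0" and n1: "1 \<le> n"
  shows "k \<ge> 1 \<Longrightarrow> k \<le> n + 1 \<Longrightarrow> Pk n Q k"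
  using P_all[OF nz n1, where i="n + 1 - k"] by simp




definition acond :: "nat \<Rightarrow> nat \<Rightarrow> nat list \<Rightarrow> bool" where
  "acond n k is \<longleftrightarrow> (\<forall>p<length is. \<forall>q<length is. \<forall>c. k \<le> c \<and> c \<le> n \<and> is ! p = c \<and> is ! q = 2 * n + 1 - c
        \<longrightarrow> int n + int p - int q \<ge> int c)"

definition admk :: "nat \<Rightarrow> nat \<Rightarrow> nat list set" where
  "admk n k = {is. sorted_wrt (<) is \<and> set is \<subseteq> {k..2 * n + 1 - k} \<and> acond n k is}"

definition Rk :: "nat \<Rightarrow> nat \<Rightarrow> nat \<Rightarrow> nat \<Rightarrow> nat \<Rightarrow> nat \<Rightarrow> bool" where
  "Rk n k a b p q \<longleftrightarrow> (\<forall>c. k \<le> c \<and> c \<le> n \<and> a = c \<and> b = 2 * n + 1 - c \<longrightarrow> int n + int p - int q \<ge> int c)"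

lemma acond_Rk: "acond n k is \<longleftrightarrow> (\<forall>p<length is. \<forall>q<length is. Rk n k (is ! p) (is ! q) p q)"
  unfolding acond_def Rk_def by blast

lemma all2_snoc:
  "(\<forall>p<Suc (length xs). \<forall>q<Suc (length xs). R ((xs @ [y]) ! p) ((xs @ [y]) ! q) p q) \<longleftrightarrow>
   (\<forall>p<length xs. \<forall>q<length xs. R (xs ! p) (xs ! q) p q) \<and> (\<forall>q<length xs. R y (xs ! q) (length xs) q)
   \<and> (\<forall>p<length xs. R (xs ! p) y p (length xs)) \<and> R y y (length xs) (length xs)"
  by (auto simp: less_Suc_eq nth_append)

lemma all2_Cons:
  "(\<forall>p<Suc (length xs). \<forall>q<Suc (length xs). R ((y # xs) ! p) ((y # xs) ! q) p q) \<longleftrightarrow>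
   (\<forall>p<length xs. \<forall>q<length xs. R (xs ! p) (xs ! q) (Suc p) (Suc q)) \<and> (\<forall>q<length xs. R y (xs ! q) 0 (Suc q))
   \<and> (\<forall>p<length xs. R (xs ! p) y (Suc p) 0) \<and> R y y 0 0"
  by (simp only: All_less_Suc2 nth_Cons_0 nth_Cons_Suc) auto

lemma Rk_shift: "Rk n k a b (Suc p) (Suc q) = Rk n k a b p q"
  unfolding Rk_def by (simp add: algebra_simps)

lemma Rk_same: "Rk n k y y p q"
  unfolding Rk_def by auto

lemma acond_Cons:
  "acond n k (y # xs) \<longleftrightarrow> acond n k xs
     \<and> (\<forall>q<length xs. Rk n k y (xs ! q) 0 (Suc q)) \<and> (\<forall>p<length xs. Rk n k (xs ! p) y (Suc p) 0)"
  using all2_Cons[where R = "Rk n k" and xs = xs and y = y]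
  unfolding acond_Rk Rk_shift by (simp add: Rk_same)

lemma acond_snoc:
  "acond n k (xs @ [y]) \<longleftrightarrow> acond n k xs
     \<and> (\<forall>q<length xs. Rk n k y (xs ! q) (length xs) q) \<and> (\<forall>p<length xs. Rk n k (xs ! p) y p (length xs))"
  using all2_snoc[where R = "Rk n k" and xs = xs and y = y]
  unfolding acond_Rk by (simp add: Rk_same)

lemma acond_lift:
  assumes "k \<notin> set xs" "2 * n + 1 - k \<notin> set xs"
  shows "acond n k xs \<longleftrightarrow> acond n (Suc k) xs"
  using assms unfolding acond_def
  by (metis Suc_leD le_antisym not_less_eq_eq nth_mem)




context
  fixes n k :: nat
  assumes k1: "1 \<le> k" and kn: "k \<le> n"
begin

lemma rng:
  assumes "set xs \<subseteq> {Suc k..2 * n + 1 - Suc k}"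
  shows "k \<notin> set xs" "2 * n + 1 - k \<notin> set xs" "set xs \<subseteq> {k..2 * n + 1 - k}"
    "\<And>x. x \<in> set xs \<Longrightarrow> k < x \<and> x < 2 * n + 1 - k"
  using assms kn by (force simp: subset_iff)+

lemma adm_A: "xs \<in> admk n (Suc k) \<Longrightarrow> xs \<in> admk n k"
  unfolding admk_def using acond_lift[of k xs n] rng[of xs] by auto

lemma adm_B: "xs \<in> admk n (Suc k) \<Longrightarrow> k # xs \<in> admk n k"
proof -
  assume a: "xs \<in> admk n (Suc k)"
  then have s: "sorted_wrt (<) xs" "set xs \<subseteq> {Suc k..2 * n + 1 - Suc k}" "acond n (Suc k) xs"
    unfolding admk_def by auto
  have nk: "k \<notin> set xs" "2 * n + 1 - k \<notin> set xs" using rng[OF s(2)] by auto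
  have "acond n k xs" using acond_lift[OF nk] s(3) by simp
  moreover have "\<forall>q<length xs. Rk n k k (xs ! q) 0 (Suc q)"
    using nk unfolding Rk_def by (metis nth_mem)
  moreover have "\<forall>p<length xs. Rk n k (xs ! p) k (Suc p) 0"
    using kn unfolding Rk_def by auto
  ultimately have "acond n k (k # xs)" unfolding acond_Cons by simp
  moreover have "sorted_wrt (<) (k # xs)" using s(1) rng(4)[OF s(2)] by auto
  moreover have "set (k # xs) \<subseteq> {k..2 * n + 1 - k}" using rng(3)[OF s(2)] kn by auto
  ultimately show ?thesis unfolding admk_def by simp
qed

lemma adm_C: "xs \<in> admk n (Suc k) \<Longrightarrow> xs @ [2 * n + 1 - k] \<in> admk n k"
proof -
  assume a: "xs \<in> admk n (Suc k)"
  then have s: "sorted_wrt (<) xs" "set xs \<subseteq> {Suc k..2 * n + 1 - Suc k}" "acond n (Suc k) xs"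
    unfolding admk_def by auto
  have nk: "k \<notin> set xs" "2 * n + 1 - k \<notin> set xs" using rng[OF s(2)] by auto
  have "acond n k xs" using acond_lift[OF nk] s(3) by simp
  moreover have "\<forall>q<length xs. Rk n k (2 * n + 1 - k) (xs ! q) (length xs) q"
    using kn unfolding Rk_def by auto
  moreover have "\<forall>p<length xs. Rk n k (xs ! p) (2 * n + 1 - k) p (length xs)"
    using nk kn unfolding Rk_def by (metis diff_diff_cancel le_add2 le_trans nth_mem trans_le_add1 mult_2 add.commute Suc_eq_plus1 le_Suc_eq)
  ultimately have "acond n k (xs @ [2 * n + 1 - k])" unfolding acond_snoc by simp
  moreover have "sorted_wrt (<) (xs @ [2 * n + 1 - k])" using s(1) rng(4)[OF s(2)]
    by (auto simp: sorted_wrt_append)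
  moreover have "set (xs @ [2 * n + 1 - k]) \<subseteq> {k..2 * n + 1 - k}" using rng(3)[OF s(2)] kn by auto
  ultimately show ?thesis unfolding admk_def by simp
qed

lemma adm_D: "xs \<in> admk n (Suc k) \<Longrightarrow> length xs + 2 \<le> n + 1 - k \<Longrightarrow> k # xs @ [2 * n + 1 - k] \<in> admk n k"
proof -
  assume a: "xs \<in> admk n (Suc k)" and l: "length xs + 2 \<le> n + 1 - k"
  have c: "xs @ [2 * n + 1 - k] \<in> admk n k" by (rule adm_C[OF a])
  then have s: "sorted_wrt (<) (xs @ [2 * n + 1 - k])" "set (xs @ [2 * n + 1 - k]) \<subseteq> {k..2 * n + 1 - k}"
     "acond n k (xs @ [2 * n + 1 - k])"
    unfolding admk_def by auto
  have s2: "set xs \<subseteq> {Suc k..2 * n + 1 - Suc k}" using a unfolding admk_def by auto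
  have "\<forall>q<length (xs @ [2 * n + 1 - k]). Rk n k k ((xs @ [2 * n + 1 - k]) ! q) 0 (Suc q)"
  proof (intro allI impI)
    fix q assume q: "q < length (xs @ [2 * n + 1 - k])"
    show "Rk n k k ((xs @ [2 * n + 1 - k]) ! q) 0 (Suc q)"
    proof (cases "q < length xs")
      case True
      have "xs ! q \<in> set xs" using True by simp
      moreover have "(xs @ [2 * n + 1 - k]) ! q = xs ! q" using True by (simp add: nth_append)
      ultimately have "(xs @ [2 * n + 1 - k]) ! q \<noteq> 2 * n + 1 - k" using rng(2)[OF s2] by metis
      then show ?thesis unfolding Rk_def by auto
    next
      case False
      then have "q = length xs" using q by simp
      then show ?thesis using l kn unfolding Rk_def by auto
    qed
  qed
  moreover have "\<forall>p<length (xs @ [2 * n + 1 - k]). Rk n k ((xs @ [2 * n + 1 - k]) ! p) k (Suc p) 0"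
    using kn unfolding Rk_def by auto
  ultimately have "acond n k (k # xs @ [2 * n + 1 - k])" using s(3) unfolding acond_Cons by simp
  moreover have "sorted_wrt (<) (k # xs @ [2 * n + 1 - k])" using s(1) rng(4)[OF s2] kn by auto
  moreover have "set (k # xs @ [2 * n + 1 - k]) \<subseteq> {k..2 * n + 1 - k}" using s(2) kn by auto
  ultimately show ?thesis unfolding admk_def by simp
qed

lemma mid:
  assumes "sorted_wrt (<) xs" "set xs \<subseteq> {k..2 * n + 1 - k}" "k \<notin> set xs" "2 * n + 1 - k \<notin> set xs"
    "acond n k xs"
  shows "xs \<in> admk n (Suc k)"
proof -
  have "set xs \<subseteq> {Suc k..2 * n + 1 - Suc k}"
  proof
    fix x assume x: "x \<in> set xs"
    then have "k \<le> x" "x \<le> 2 * n + 1 - k" "x \<noteq> k" "x \<noteq> 2 * n + 1 - k" using assms by auto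
    then show "x \<in> {Suc k..2 * n + 1 - Suc k}" by auto
  qed
  then show ?thesis using assms acond_lift[OF assms(3,4)] unfolding admk_def by auto
qed

lemma head_k:
  fixes "is" :: "nat list"
  assumes "sorted_wrt (<) is" "set is \<subseteq> {k..m}" "k \<in> set is"
  shows "\<exists>xs. is = k # xs"
proof (cases "is")
  case Nil then show ?thesis using assms by simp
next
  case (Cons x xs)
  show ?thesis
  proof (cases "x = k")
    case True then show ?thesis using Cons by simp
  next
    case False
    then have "k \<in> set xs" using assms Cons by simp
    then have "x < k" using assms(1) Cons by simp
    moreover have "k \<le> x" using assms(2) Cons by simp
    ultimately have False by simp
    then show ?thesis ..
  qed
qed

lemma last_m:
  fixes "is" :: "nat list"
  assumes "sorted_wrt (<) is" "set is \<subseteq> {j..m}" "m \<in> set is"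
  shows "\<exists>xs. is = xs @ [m]"
proof (cases "is" rule: rev_exhaust)
  case Nil then show ?thesis using assms by simp
next
  case (snoc ys y)
  show ?thesis
  proof (cases "y = m")
    case True then show ?thesis using snoc by simp
  next
    case False
    then have "m \<in> set ys" using assms snoc by simp
    then have "m < y" using assms(1) snoc by (simp add: sorted_wrt_append)
    moreover have "y \<le> m" using assms(2) snoc by simp
    ultimately have False by simp
    then show ?thesis ..
  qed
qed

lemma adm_dec:
  assumes "is \<in> admk n k"
  shows "is \<in> admk n (Suc k) \<or> (\<exists>xs. is = k # xs \<and> xs \<in> admk n (Suc k))
    \<or> (\<exists>xs. is = xs @ [2 * n + 1 - k] \<and> xs \<in> admk n (Suc k))
    \<or> (\<exists>xs. is = k # xs @ [2 * n + 1 - k] \<and> xs \<in> admk n (Suc k) \<and> length xs + 2 \<le> n + 1 - k)"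
proof -
  let ?kb = "2 * n + 1 - k"
  have s: "sorted_wrt (<) is" "set is \<subseteq> {k..?kb}" "acond n k is"
    using assms unfolding admk_def by auto
  have kkb: "k < ?kb" using kn by simp
  consider "k \<notin> set is" "?kb \<notin> set is" | "k \<in> set is" | "k \<notin> set is" "?kb \<in> set is" by blast
  then show ?thesis
  proof cases
    case 1
    then show ?thesis using mid[OF s(1,2) 1 s(3)] by simp
  next
    case 2
    obtain xs where xs: "is = k # xs" using head_k[OF s(1,2) 2] by blast
    have sx: "sorted_wrt (<) xs" "\<forall>x\<in>set xs. k < x" using s(1) xs by auto
    have kx: "k \<notin> set xs" using sx(2) by auto
    have setx: "set xs \<subseteq> {k..?kb}" using s(2) xs by auto
    have ac: "acond n k xs" "\<forall>q<length xs. Rk n k k (xs ! q) 0 (Suc q)"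
      using s(3) unfolding xs acond_Cons by auto
    show ?thesis
    proof (cases "?kb \<in> set xs")
      case False
      then show ?thesis using mid[OF sx(1) setx kx False ac(1)] xs by simp
    next
      case True
      obtain ys where ys: "xs = ys @ [?kb]" using last_m[OF sx(1) setx True] by blast
      have sy: "sorted_wrt (<) ys" "\<forall>x\<in>set ys. x < ?kb" using sx(1) ys by (auto simp: sorted_wrt_append)
      have ky: "k \<notin> set ys" "?kb \<notin> set ys" using kx ys sy(2) by auto
      have sety: "set ys \<subseteq> {k..?kb}" using setx ys by auto
      have acy: "acond n k ys" using ac(1) unfolding ys acond_snoc by simp
      have "length ys < length xs" using ys by simp
      then have "Rk n k k (xs ! length ys) 0 (Suc (length ys))" using ac(2) by blast
      moreover have "xs ! length ys = ?kb" using ys by simp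
      ultimately have "Rk n k k ?kb 0 (Suc (length ys))" by simp
      then have "int n + 0 - int (Suc (length ys)) \<ge> int k" unfolding Rk_def using kn by auto
      then have "length ys + 2 \<le> n + 1 - k" by linarith
      then show ?thesis using mid[OF sy(1) sety ky acy] xs ys by simp
    qed
  next
    case 3
    obtain ys where ys: "is = ys @ [?kb]" using last_m[OF s(1,2) 3(2)] by blast
    have sy: "sorted_wrt (<) ys" "\<forall>x\<in>set ys. x < ?kb" using s(1) ys by (auto simp: sorted_wrt_append)
    have ky: "k \<notin> set ys" "?kb \<notin> set ys" using 3 ys sy(2) by auto
    have sety: "set ys \<subseteq> {k..?kb}" using s(2) ys by auto
    have acy: "acond n k ys" using s(3) unfolding ys acond_snoc by simp
    show ?thesis using mid[OF sy(1) sety ky acy] ys by simp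
  qed
qed

end




definition Sk :: "nat \<Rightarrow> nat \<Rightarrow> nat \<Rightarrow> nat list set" where
  "Sk n k b = {is \<in> admk n k. length is = b}"

definition pr :: "nat \<Rightarrow> (nat \<Rightarrow> complex \<Rightarrow> 'f::field) \<Rightarrow> nat \<Rightarrow> nat list \<Rightarrow> complex \<Rightarrow> 'f" where
  "pr n Q k xs u = (\<Prod>m<length xs. zz n Q (xs ! m) (u + of_nat n + 1 - of_nat k - of_nat m))"

definition TS :: "nat \<Rightarrow> (nat \<Rightarrow> complex \<Rightarrow> 'f::field) \<Rightarrow> nat \<Rightarrow> nat \<Rightarrow> complex \<Rightarrow> 'f" where
  "TS n Q k b u = (\<Sum>is\<in>Sk n k b. pr n Q k is u)"

definition TSi :: "nat \<Rightarrow> (nat \<Rightarrow> complex \<Rightarrow> 'f::field) \<Rightarrow> nat \<Rightarrow> int \<Rightarrow> complex \<Rightarrow> 'f" where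
  "TSi n Q k s u = (if s < 0 then 0 else TS n Q k (nat s) u)"

lemma Sk_finite: "finite (Sk n k b)"
proof -
  have "Sk n k b \<subseteq> {xs. set xs \<subseteq> {k..2 * n + 1 - k} \<and> length xs = b}"
    unfolding Sk_def admk_def by auto
  moreover have "finite {xs. set xs \<subseteq> {k..2 * n + 1 - k} \<and> length xs = b}"
    by (rule finite_lists_length_eq) simp
  ultimately show ?thesis by (rule finite_subset)
qed

lemma pr_A: "pr n Q k xs u = pr n Q (Suc k) xs (u + 1)"
  unfolding pr_def by (intro prod.cong) (simp_all add: algebra_simps)

lemma pr_Cons: "pr n Q k (y # xs) u = zz n Q y (u + of_nat n + 1 - of_nat k) * pr n Q (Suc k) xs u"
  unfolding pr_def length_Cons prod.lessThan_Suc_shift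
  by (simp add: algebra_simps)

lemma pr_snoc: "pr n Q k (xs @ [y]) u = pr n Q (Suc k) xs (u + 1) * zz n Q y (u + of_nat n + 1 - of_nat k - of_nat (length xs))"
proof -
  have "pr n Q k (xs @ [y]) u = pr n Q k xs u * zz n Q y (u + of_nat n + 1 - of_nat k - of_nat (length xs))"
    unfolding pr_def length_append_singleton prod.lessThan_Suc
    by (simp add: nth_append)
  then show ?thesis using pr_A by metis
qed

lemma TS_zero: "TS n Q k 0 u = 1"
proof -
  have "Sk n k 0 = {[]}" unfolding Sk_def admk_def acond_def by auto
  then show ?thesis unfolding TS_def pr_def by simp
qed




lemma Sk_top: "Sk n (Suc n) b = (if b = 0 then {[]} else {})"
proof -
  have e: "{Suc n..2 * n + 1 - Suc n} = {}" by simp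
  have "\<And>is. is \<in> admk n (Suc n) \<Longrightarrow> is = []"
    unfolding admk_def e by simp
  moreover have "[] \<in> admk n (Suc n)" unfolding admk_def acond_def by simp
  ultimately show ?thesis unfolding Sk_def by auto
qed

lemma Sk_empty_step:
  assumes k1: "1 \<le> k" and kn: "k \<le> n" and IH: "\<And>b. b > n + 1 - Suc k \<Longrightarrow> Sk n (Suc k) b = {}"
    and b: "b > n + 1 - k"
  shows "Sk n k b = {}"
proof (rule ccontr)
  assume "Sk n k b \<noteq> {}"
  then obtain "is" where i: "is \<in> admk n k" "length is = b" unfolding Sk_def by auto
  from adm_dec[OF k1 kn i(1)] show False
  proof (elim disjE exE conjE)
    assume "is \<in> admk n (Suc k)"
    then have "is \<in> Sk n (Suc k) b" using i unfolding Sk_def by simp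
    then show False using IH[of b] b by auto
  next
    fix xs assume "is = k # xs" "xs \<in> admk n (Suc k)"
    then have "xs \<in> Sk n (Suc k) (b - 1)" using i unfolding Sk_def by auto
    moreover have "n + 1 - Suc k < b - 1" using b kn by simp
    ultimately show False using IH[of "b - 1"] by auto
  next
    fix xs assume "is = xs @ [2 * n + 1 - k]" "xs \<in> admk n (Suc k)"
    then have "xs \<in> Sk n (Suc k) (b - 1)" using i unfolding Sk_def by auto
    moreover have "n + 1 - Suc k < b - 1" using b kn by simp
    ultimately show False using IH[of "b - 1"] by auto
  next
    fix xs assume "is = k # xs @ [2 * n + 1 - k]" "length xs + 2 \<le> n + 1 - k"
    then show False using i b by auto
  qed
qed

lemma Sk_empty_all:
  "i \<le> n \<Longrightarrow> b > i \<Longrightarrow> Sk n (n + 1 - i) b = {}"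
proof (induction i arbitrary: b)
  case 0
  then show ?case using Sk_top[of n b] by simp
next
  case (Suc i)
  have "Sk n (n + 1 - Suc i) b = {}"
  proof (rule Sk_empty_step)
    show "1 \<le> n + 1 - Suc i" "n + 1 - Suc i \<le> n" using Suc.prems by auto
    show "\<And>b. n + 1 - Suc (n + 1 - Suc i) < b \<Longrightarrow> Sk n (Suc (n + 1 - Suc i)) b = {}"
    proof -
      fix b' assume "n + 1 - Suc (n + 1 - Suc i) < b'"
      then have "i < b'" using Suc.prems by simp
      moreover have "Suc (n + 1 - Suc i) = n + 1 - i" using Suc.prems by simp
      ultimately show "Sk n (Suc (n + 1 - Suc i)) b' = {}" using Suc.IH[of b'] Suc.prems by simp
    qed
    show "n + 1 - (n + 1 - Suc i) < b" using Suc.prems by simp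
  qed
  then show ?case .
qed

lemma Sk_empty:
  "1 \<le> k \<Longrightarrow> k \<le> n + 1 \<Longrightarrow> b > n + 1 - k \<Longrightarrow> Sk n k b = {}"
  using Sk_empty_all[of "n + 1 - k" n b] by simp

lemma TS_empty: "1 \<le> k \<Longrightarrow> k \<le> n + 1 \<Longrightarrow> b > n + 1 - k \<Longrightarrow> TS n Q k b u = 0"
  unfolding TS_def using Sk_empty by simp




context
  fixes n k :: nat
  assumes k1: "1 \<le> k" and kn: "k \<le> n"
begin

lemma Sk_dec:
  assumes b: "b \<le> n + 1 - k"
  shows "Sk n k b = Sk n (Suc k) b \<union> Cons k ` {xs \<in> admk n (Suc k). Suc (length xs) = b}
     \<union> (\<lambda>x. x @ [2 * n + 1 - k]) ` {xs \<in> admk n (Suc k). Suc (length xs) = b}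
     \<union> (\<lambda>x. k # x @ [2 * n + 1 - k]) ` {xs \<in> admk n (Suc k). Suc (Suc (length xs)) = b}"
proof (intro equalityI subsetI)
  fix "is" assume "is \<in> Sk n k b"
  then have i: "is \<in> admk n k" "length is = b" unfolding Sk_def by auto
  from adm_dec[OF k1 kn i(1)] show "is \<in> Sk n (Suc k) b \<union> Cons k ` {xs \<in> admk n (Suc k). Suc (length xs) = b}
     \<union> (\<lambda>x. x @ [2 * n + 1 - k]) ` {xs \<in> admk n (Suc k). Suc (length xs) = b}
     \<union> (\<lambda>x. k # x @ [2 * n + 1 - k]) ` {xs \<in> admk n (Suc k). Suc (Suc (length xs)) = b}"
    using i unfolding Sk_def by auto
next
  fix "is"
  assume "is \<in> Sk n (Suc k) b \<union> Cons k ` {xs \<in> admk n (Suc k). Suc (length xs) = b}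
     \<union> (\<lambda>x. x @ [2 * n + 1 - k]) ` {xs \<in> admk n (Suc k). Suc (length xs) = b}
     \<union> (\<lambda>x. k # x @ [2 * n + 1 - k]) ` {xs \<in> admk n (Suc k). Suc (Suc (length xs)) = b}"
  then show "is \<in> Sk n k b"
  proof (elim UnE imageE)
    assume "is \<in> Sk n (Suc k) b" then show ?thesis using adm_A[OF k1 kn] unfolding Sk_def by auto
  next
    fix xs assume "xs \<in> {xs \<in> admk n (Suc k). Suc (length xs) = b}" "is = k # xs"
    then show ?thesis using adm_B[OF k1 kn] unfolding Sk_def by auto
  next
    fix xs assume "xs \<in> {xs \<in> admk n (Suc k). Suc (length xs) = b}" "is = xs @ [2 * n + 1 - k]"
    then show ?thesis using adm_C[OF k1 kn] unfolding Sk_def by auto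
  next
    fix xs assume "xs \<in> {xs \<in> admk n (Suc k). Suc (Suc (length xs)) = b}" "is = k # xs @ [2 * n + 1 - k]"
    then show ?thesis using adm_D[OF k1 kn] b unfolding Sk_def by auto
  qed
qed

lemma in_range: "xs \<in> admk n (Suc k) \<Longrightarrow> k \<notin> set xs \<and> 2 * n + 1 - k \<notin> set xs"
  unfolding admk_def using rng[OF k1 kn] by blast

lemma TS_rec:
  assumes b: "b \<le> n + 1 - k"
  shows "TS n Q k b u = TS n Q (Suc k) b (u + 1)
    + (if 1 \<le> b then zz n Q k (u + of_nat n + 1 - of_nat k) * TS n Q (Suc k) (b - 1) u
         + TS n Q (Suc k) (b - 1) (u + 1) * zz n Q (2 * n + 1 - k) (u + of_nat n + 1 - of_nat k - of_nat (b - 1)) else 0)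
    + (if 2 \<le> b then zz n Q k (u + of_nat n + 1 - of_nat k) * TS n Q (Suc k) (b - 2) u
         * zz n Q (2 * n + 1 - k) (u + of_nat n + 1 - of_nat k - of_nat (b - 1)) else 0)"
proof -
  let ?kb = "2 * n + 1 - k"
  define T1 where "T1 = {xs \<in> admk n (Suc k). Suc (length xs) = b}"
  define T2 where "T2 = {xs \<in> admk n (Suc k). Suc (Suc (length xs)) = b}"
  define A where "A = Sk n (Suc k) b"
  define B where "B = Cons k ` T1"
  define C where "C = (\<lambda>x. x @ [?kb]) ` T1"
  define D where "D = (\<lambda>x. k # x @ [?kb]) ` T2"
  have kkb: "k \<noteq> ?kb" using kn by simp
  have T1e: "T1 = (if 1 \<le> b then Sk n (Suc k) (b - 1) else {})"
    unfolding T1_def Sk_def by auto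
  have T2e: "T2 = (if 2 \<le> b then Sk n (Suc k) (b - 2) else {})"
    unfolding T2_def Sk_def by auto
  have fin: "finite A" "finite B" "finite C" "finite D"
    unfolding A_def B_def C_def D_def T1e T2e using Sk_finite by auto
  have mA: "\<And>x. x \<in> A \<Longrightarrow> k \<notin> set x \<and> ?kb \<notin> set x" unfolding A_def Sk_def using in_range by auto
  have mB: "\<And>x. x \<in> B \<Longrightarrow> k \<in> set x \<and> ?kb \<notin> set x" unfolding B_def T1_def using in_range kkb by auto
  have mC: "\<And>x. x \<in> C \<Longrightarrow> k \<notin> set x \<and> ?kb \<in> set x" unfolding C_def T1_def using in_range kkb by auto
  have mD: "\<And>x. x \<in> D \<Longrightarrow> k \<in> set x \<and> ?kb \<in> set x" unfolding D_def T2_def using in_range by auto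
  have S: "Sk n k b = A \<union> B \<union> C \<union> D"
    unfolding A_def B_def C_def D_def T1_def T2_def by (rule Sk_dec[OF b])
  have "TS n Q k b u = sum (\<lambda>is. pr n Q k is u) A + sum (\<lambda>is. pr n Q k is u) B
      + sum (\<lambda>is. pr n Q k is u) C + sum (\<lambda>is. pr n Q k is u) D"
  proof -
    have d1: "(A \<union> B \<union> C) \<inter> D = {}" using mA mB mC mD by blast
    have d2: "(A \<union> B) \<inter> C = {}" using mA mB mC by blast
    have d3: "A \<inter> B = {}" using mA mB by blast
    have f1: "finite (A \<union> B \<union> C)" "finite (A \<union> B)" using fin by auto
    show ?thesis unfolding TS_def S
      sum.union_disjoint[OF f1(1) fin(4) d1] sum.union_disjoint[OF f1(2) fin(3) d2]
      sum.union_disjoint[OF fin(1) fin(2) d3] ..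
  qed
  also have "sum (\<lambda>is. pr n Q k is u) A = TS n Q (Suc k) b (u + 1)"
    unfolding A_def TS_def using pr_A by metis
  also have "sum (\<lambda>is. pr n Q k is u) B = (if 1 \<le> b then zz n Q k (u + of_nat n + 1 - of_nat k) * TS n Q (Suc k) (b - 1) u else 0)"
  proof -
    have "sum (\<lambda>is. pr n Q k is u) B = sum (\<lambda>xs. pr n Q k (k # xs) u) T1"
      unfolding B_def by (subst sum.reindex) (auto simp: inj_on_def)
    also have "\<dots> = zz n Q k (u + of_nat n + 1 - of_nat k) * sum (\<lambda>xs. pr n Q (Suc k) xs u) T1"
      unfolding pr_Cons sum_distrib_left ..
    finally show ?thesis unfolding T1e TS_def by simp
  qed
  also have "sum (\<lambda>is. pr n Q k is u) C = (if 1 \<le> b then TS n Q (Suc k) (b - 1) (u + 1) * zz n Q ?kb (u + of_nat n + 1 - of_nat k - of_nat (b - 1)) else 0)"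
  proof -
    have "sum (\<lambda>is. pr n Q k is u) C = sum (\<lambda>xs. pr n Q k (xs @ [?kb]) u) T1"
      unfolding C_def by (subst sum.reindex) (auto simp: inj_on_def)
    also have "\<dots> = sum (\<lambda>xs. pr n Q (Suc k) xs (u + 1) * zz n Q ?kb (u + of_nat n + 1 - of_nat k - of_nat (b - 1))) T1"
      unfolding pr_snoc by (rule sum.cong) (auto simp: T1_def algebra_simps)
    finally show ?thesis unfolding T1e TS_def sum_distrib_right by simp
  qed
  also have "sum (\<lambda>is. pr n Q k is u) D = (if 2 \<le> b then zz n Q k (u + of_nat n + 1 - of_nat k) * TS n Q (Suc k) (b - 2) u
         * zz n Q ?kb (u + of_nat n + 1 - of_nat k - of_nat (b - 1)) else 0)"
  proof -
    have "sum (\<lambda>is. pr n Q k is u) D = sum (\<lambda>xs. pr n Q k (k # xs @ [?kb]) u) T2"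
      unfolding D_def by (subst sum.reindex) (auto simp: inj_on_def)
    also have "\<dots> = sum (\<lambda>xs. zz n Q k (u + of_nat n + 1 - of_nat k) * pr n Q (Suc k) xs u * zz n Q ?kb (u + of_nat n + 1 - of_nat k - of_nat (b - 1))) T2"
    proof (rule sum.cong)
      fix xs assume "xs \<in> T2"
      then have l: "Suc (Suc (length xs)) = b" unfolding T2_def by simp
      have e: "u + of_nat n + 1 - of_nat (Suc k) - of_nat (length xs) = u + of_nat n + 1 - of_nat k - of_nat (b - 1)"
        using l[symmetric] by simp
      show "pr n Q k (k # xs @ [?kb]) u = zz n Q k (u + of_nat n + 1 - of_nat k) * pr n Q (Suc k) xs u * zz n Q ?kb (u + of_nat n + 1 - of_nat k - of_nat (b - 1))"
        unfolding pr_Cons pr_snoc e using pr_A[of n Q "Suc k" xs u] by simp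
    qed simp
    finally show ?thesis unfolding T2e TS_def sum_distrib_right sum_distrib_left by (simp add: mult.assoc)
  qed
  finally show ?thesis by (simp add: algebra_simps)
qed

end




lemma xx_low: "k \<le> n \<Longrightarrow> xx n Q k w = zz n Q k w"
  unfolding xx_def by simp

lemma xx_bar:
  assumes "1 \<le> k" "k \<le> n"
  shows "xx n Q (Suc k + (2 * (n + 1 - Suc k) + 2)) w = zz n Q (2 * n + 1 - k) w"
proof -
  have i: "Suc k + (2 * (n + 1 - Suc k) + 2) = 2 * n + 3 - k" using assms by simp
  have j: "2 * n + 1 - (2 * n + 3 - (2 * n + 3 - k)) = 2 * n + 1 - k" using assms by simp
  have "\<not> (2 * n + 3 - k \<le> n)" "2 * n + 3 - k \<noteq> n + 1" "2 * n + 3 - k \<noteq> n + 2"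
    using assms by auto
  then show ?thesis unfolding i xx_def by (simp only: if_False j)
qed

lemma G_mid_zero:
  assumes P: "Pk n Q k" and two: "(2::'f::field) \<noteq> 0"
    and Ynz: "\<And>x. YY n Q (k - 1) x \<noteq> (0::'f)"
  shows "G n Q k (int (n + 1 - k) + 1) u = (0::'f)"
proof -
  from P[unfolded Pk_def, rule_format, of 0 u]
  have "G n Q k (int (n + 1 - k) + 1) u = - G n Q k (int (n + 1 - k) + 1) u"
    using Ynz by simp
  then have "2 * G n Q k (int (n + 1 - k) + 1) u = 0" by (simp add: algebra_simps)
  then show ?thesis using two by simp
qed

lemma I_step:
  assumes k1: "1 \<le> k" and kn: "k \<le> n"
    and IH: "\<And>b u. b \<le> n + 2 - Suc k \<Longrightarrow> G n Q (Suc k) (int b) u = TS n Q (Suc k) b u"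
    and b: "b \<le> n + 1 - k"
  shows "G n Q k (int b) u = TS n Q k b u"
proof -
  define m where "m = 2 * (n + 1 - Suc k) + 2"
  have Gk: "\<And>s v. G n Q k s v = Ef n Q (Suc (Suc m)) k s v"
    unfolding G_def m_def using k1 kn by (simp add: Suc_diff_le)
  have Gk1: "\<And>s v. G n Q (Suc k) s v = Ef n Q m (Suc k) s v"
    unfolding G_def m_def by simp
  have IH': "\<And>b u. b \<le> n + 1 - k \<Longrightarrow> Ef n Q m (Suc k) (int b) u = TS n Q (Suc k) b u"
  proof -
    fix b u assume "b \<le> n + 1 - k"
    moreover have "n + 2 - Suc k = n + 1 - k" by simp
    ultimately show "Ef n Q m (Suc k) (int b) u = TS n Q (Suc k) b u" using IH[of b u] Gk1 by simp
  qed
  have X: "xx n Q k (u + of_nat n + 1 - of_nat k) = zz n Q k (u + of_nat n + 1 - of_nat k)"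
    by (rule xx_low[OF kn])
  have Z: "xx n Q (Suc k + m) (u + of_nat n + 2 - of_nat k - of_int (int b))
      = zz n Q (2 * n + 1 - k) (u + of_nat n + 1 - of_nat k - of_nat (b - 1))" if "1 \<le> b"
  proof -
    have e: "u + of_nat n + 2 - of_nat k - of_int (int b) = u + of_nat n + 1 - of_nat k - of_nat (b - 1)"
      using that by (simp add: of_nat_diff)
    show ?thesis unfolding m_def xx_bar[OF k1 kn] e ..
  qed
  have "G n Q k (int b) u = Ef n Q m (Suc k) (int b) (u + 1)
   + xx n Q k (u + of_nat n + 1 - of_nat k) * Ef n Q m (Suc k) (int b - 1) u
   + Ef n Q m (Suc k) (int b - 1) (u + 1) * xx n Q (Suc k + m) (u + of_nat n + 2 - of_nat k - of_int (int b))
   + xx n Q k (u + of_nat n + 1 - of_nat k) * Ef n Q m (Suc k) (int b - 2) u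
       * xx n Q (Suc k + m) (u + of_nat n + 2 - of_nat k - of_int (int b))"
    unfolding Gk by (rule Ef_two)
  also have "\<dots> = TS n Q k b u"
  proof (cases "b = 0")
    case True
    then show ?thesis using IH'[of 0] by (simp add: Ef_out TS_zero)
  next
    case False
    then have b1: "1 \<le> b" by simp
    have e1: "int b - 1 = int (b - 1)" using b1 by simp
    have t1: "Ef n Q m (Suc k) (int b) (u + 1) = TS n Q (Suc k) b (u + 1)" using IH' b by simp
    have t2: "Ef n Q m (Suc k) (int b - 1) u = TS n Q (Suc k) (b - 1) u"
      "Ef n Q m (Suc k) (int b - 1) (u + 1) = TS n Q (Suc k) (b - 1) (u + 1)"
      unfolding e1 using IH' b by simp_all
    have t4: "xx n Q k (u + of_nat n + 1 - of_nat k) * Ef n Q m (Suc k) (int b - 2) u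
       * xx n Q (Suc k + m) (u + of_nat n + 2 - of_nat k - of_int (int b)) =
       (if 2 \<le> b then zz n Q k (u + of_nat n + 1 - of_nat k) * TS n Q (Suc k) (b - 2) u
         * zz n Q (2 * n + 1 - k) (u + of_nat n + 1 - of_nat k - of_nat (b - 1)) else 0)"
    proof (cases "2 \<le> b")
      case True
      have "int b - 2 = int (b - 2)" using True by simp
      then show ?thesis using True IH'[of "b - 2" u] b X Z[OF b1] by simp
    next
      case False
      then show ?thesis by (simp add: Ef_out)
    qed
    show ?thesis
      unfolding TS_rec[OF k1 kn b] t4 unfolding t1 t2 X Z[OF b1] using b1 by simp
  qed
  finally show ?thesis .
qed




lemma I_all:
  assumes nz: "\<And>b x. 1 \<le> b \<Longrightarrow> b \<le> n \<Longrightarrow> Q b x \<noteq> 0" and n1: "1 \<le> n"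
    and two: "(2::'f::field) \<noteq> 0"
  shows "i \<le> n \<Longrightarrow> b \<le> n + 2 - (n + 1 - i) \<Longrightarrow> G n Q (n + 1 - i) (int b) u = (TS n Q (n + 1 - i) b u :: 'f)"
proof (induction i arbitrary: b u)
  case 0
  then have "b = 0 \<or> b = 1" by auto
  then show ?case
  proof
    assume "b = 0" then show ?thesis by (simp add: G_def Ef_zero TS_zero)
  next
    assume "b = 1" then show ?thesis using G_base'[of n Q 1 u] TS_empty[of "n + 1" n 1 Q u] by simp
  qed
next
  case (Suc i)
  define k where "k = n + 1 - Suc i"
  have k1: "1 \<le> k" and kn: "k \<le> n" using Suc.prems unfolding k_def by auto
  have sk: "Suc k = n + 1 - i" unfolding k_def using Suc.prems by simp
  have IH: "\<And>b u. b \<le> n + 2 - Suc k \<Longrightarrow> G n Q (Suc k) (int b) u = TS n Q (Suc k) b u"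
    unfolding sk using Suc.IH Suc.prems by simp
  have bb: "b \<le> n + 2 - k" using Suc.prems unfolding k_def by simp
  show ?case unfolding k_def[symmetric]
  proof -
   show "G n Q k (int b) u = TS n Q k b u"
   proof (cases "b \<le> n + 1 - k")
    case True
    show ?thesis using I_step[OF k1 kn IH True] .
  next
    case False
    then have b: "b = n + 2 - k" using bb by simp
    have P: "Pk n Q k" using P_one[OF nz n1] k1 kn by simp
    have Ynz: "\<And>x. YY n Q (k - 1) x \<noteq> 0" using YY_nz[OF nz] kn by simp
    have "int b = int (n + 1 - k) + 1" using b kn by simp
    then have "G n Q k (int b) u = 0" using G_mid_zero[OF P two Ynz] by simp
    moreover have "TS n Q k b u = 0" using TS_empty[of k n b Q u] k1 kn b by simp
    ultimately show ?thesis by simp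
   qed
  qed
qed

lemma I_one:
  assumes nz: "\<And>b x. 1 \<le> b \<Longrightarrow> b \<le> n \<Longrightarrow> Q b x \<noteq> 0" and n1: "1 \<le> n"
    and two: "(2::'f::field) \<noteq> 0" and b: "b \<le> n + 1"
  shows "G n Q 1 (int b) u = (TS n Q 1 b u :: 'f)"
  using I_all[OF nz n1 two, where i=n and b=b and u=u] b by simp




lemma alg_nz:
  fixes Q :: "nat \<Rightarrow> complex \<Rightarrow> 'f::field"
  assumes A: "alg_indep_Z (\<lambda>(b, u). Q b u) ({1..n} \<times> UNIV)" and b: "1 \<le> b" "b \<le> n"
  shows "Q b x \<noteq> (0::'f::field)"
proof
  assume z: "Q b x = 0"
  define c where "c = (\<lambda>e::nat list. if e = [1] then (1::int) else 0)"
  have s: "{e. c e \<noteq> 0} = {[1]}" unfolding c_def by auto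
  have sum0: "(\<Sum>e\<in>{e. c e \<noteq> 0}. of_int (c e) * (\<Prod>j<length [(b, x)]. (\<lambda>(b, u). Q b u) ([(b, x)] ! j) ^ (e ! j))) = (0::'f)"
    unfolding s using z by (simp add: c_def)
  have pre: "distinct [(b, x)] \<and> set [(b, x)] \<subseteq> {1..n} \<times> UNIV \<and> finite {e. c e \<noteq> 0} \<and>
       (\<forall>e. c e \<noteq> 0 \<longrightarrow> length e = length [(b, x)])"
    using b unfolding s by (auto simp: c_def)
  have "\<forall>e. c e = 0"
    using A unfolding alg_indep_Z_def using pre sum0 by blast
  then show False unfolding c_def by (metis one_neq_zero)
qed

lemma alg_two:
  fixes Q :: "nat \<Rightarrow> complex \<Rightarrow> 'f::field"
  assumes A: "alg_indep_Z (\<lambda>(b, u). Q b u) ({1..n} \<times> UNIV)"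
  shows "(2::'f::field) \<noteq> 0"
proof
  assume z: "(2::'f) = 0"
  define c where "c = (\<lambda>e::nat list. if e = [] then (2::int) else 0)"
  define vs where "vs = ([] :: (nat \<times> complex) list)"
  have s: "{e. c e \<noteq> 0} = {[]}" unfolding c_def by auto
  have sum0: "(\<Sum>e\<in>{e. c e \<noteq> 0}. of_int (c e) * (\<Prod>j<length vs. (\<lambda>(b, u). Q b u) (vs ! j) ^ (e ! j))) = (0::'f)"
    unfolding s vs_def using z by (simp add: c_def)
  have pre: "distinct vs \<and> set vs \<subseteq> {1..n} \<times> UNIV \<and> finite {e. c e \<noteq> 0} \<and>
       (\<forall>e. c e \<noteq> 0 \<longrightarrow> length e = length vs)"
    unfolding s vs_def by (auto simp: c_def)
  have "\<forall>e. c e = 0"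
    using A unfolding alg_indep_Z_def using pre sum0 by blast
  then show False unfolding c_def by (metis zero_neq_numeral)
qed




lemma adm_Sk: "adm n b = Sk n 1 b"
  unfolding adm_def Sk_def admk_def acond_def by auto

lemma TS_one: "TS n Q 1 b v = (\<Sum>is\<in>adm n b. \<Prod>m<b. zz n Q (is ! m) (v + of_nat n - of_nat m))"
  unfolding TS_def adm_Sk pr_def
  by (rule sum.cong) (auto simp: Sk_def)

lemma Pk1:
  assumes nz: "\<And>b x. 1 \<le> b \<Longrightarrow> b \<le> n \<Longrightarrow> Q b x \<noteq> 0" and n1: "1 \<le> n"
  shows "G n Q 1 (int n + 1 + j) u = - G n Q 1 (int n + 1 - j) (u - of_int j)"
  using P_one[where Q=Q and n=n and k=1, OF nz n1] unfolding Pk_def by (simp add: YY_def)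

lemma T_eq:
  assumes nz: "\<And>b x. 1 \<le> b \<Longrightarrow> b \<le> n \<Longrightarrow> Q b x \<noteq> 0" and n1: "1 \<le> n"
    and two: "(2::'f::field) \<noteq> 0" and a: "a \<le> 2 * n + 2"
  shows "TT n Q a (u + of_nat a / 2) = - (G n Q 1 (int (2 * n + 2 - a)) u :: 'f)"
proof -
  consider "a = 0" | "1 \<le> a \<and> a \<le> n" | "a = n + 1" | "n + 2 \<le> a" by linarith
  then show ?thesis
  proof cases
    case 1
    have "G n Q 1 (int n + 1 + int (n + 1)) u = - G n Q 1 (int n + 1 - int (n + 1)) (u - of_int (int (n + 1)))"
      by (rule Pk1[OF nz n1])
    moreover have "int n + 1 + int (n + 1) = int (2 * n + 2)" "int n + 1 - int (n + 1) = 0" by simp_all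
    ultimately have "G n Q 1 (int (2 * n + 2)) u = -1" by (simp add: G_def Ef_zero)
    then show ?thesis using 1 by (simp add: TT_def)
  next
    case 2
    have h: "G n Q 1 (int n + 1 + int (n + 1 - a)) u = - G n Q 1 (int n + 1 - int (n + 1 - a)) (u - of_int (int (n + 1 - a)))"
      by (rule Pk1[OF nz n1])
    have e1: "int n + 1 + int (n + 1 - a) = int (2 * n + 2 - a)" and e2: "int n + 1 - int (n + 1 - a) = int a"
      using 2 by simp_all
    have e3: "u - of_int (int (n + 1 - a)) = u - of_nat n - 1 + of_nat a" using 2 by (simp add: of_nat_diff)
    have g: "G n Q 1 (int (2 * n + 2 - a)) u = - TS n Q 1 a (u - of_nat n - 1 + of_nat a)"
    proof -
      have al: "a \<le> n + 1" using 2 by simp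
      have i: "G n Q 1 (int a) (u - of_nat n - 1 + of_nat a) = TS n Q 1 a (u - of_nat n - 1 + of_nat a)"
        by (rule I_one[OF nz n1 two al])
      show ?thesis using h unfolding e1 e2 e3 i .
    qed
    have "TT n Q a (u + of_nat a / 2) = (\<Sum>is\<in>adm n a. \<Prod>k<a. zz n Q (is ! k) (u - of_nat n - 1 + of_nat a + of_nat n - of_nat k))"
      using 2 unfolding TT_def
      by (auto intro!: sum.cong prod.cong arg_cong[where f = "zz n Q _"] simp: field_simps)
    then show ?thesis using g unfolding TS_one by simp
  next
    case 3
    have P: "Pk n Q 1" using P_one[OF nz n1] by simp
    have e: "int (2 * n + 2 - a) = int (n + 1 - 1) + 1" using 3 by simp
    have z: "G n Q 1 (int (2 * n + 2 - a)) u = 0" unfolding e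
      by (rule G_mid_zero[OF P two]) (simp add: YY_def)
    show ?thesis unfolding z using 3 by (simp add: TT_def)
  next
    case 4
    define b where "b = 2 * n + 2 - a"
    have bn: "b \<le> n" using 4 a unfolding b_def by simp
    have g: "G n Q 1 (int b) u = TS n Q 1 b u" using I_one[where Q=Q and n=n and b=b, OF nz n1 two] bn by simp
    show ?thesis
    proof (cases "b = 0")
      case True
      then show ?thesis using 4 g a unfolding b_def by (simp add: TT_def TS_zero)
    next
      case False
      have "TT n Q a (u + of_nat a / 2) = - (\<Sum>is\<in>adm n b. \<Prod>k<b. zz n Q (is ! k) (u + of_nat n - of_nat k))"
        using 4 a False unfolding TT_def b_def
        by (auto intro!: sum.cong prod.cong arg_cong[where f = "zz n Q _"] simp: field_simps of_nat_diff)
      then show ?thesis using g unfolding TS_one b_def by simp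
    qed
  qed
qed




lemma idx_zero: "filter (\<lambda>i. i \<noteq> 0) [0..int N] = [1..int N]"
proof -
  have "[0..int N] = 0 # [1..int N]" using upto_rec1[of 0 "int N"] by simp
  moreover have "filter (\<lambda>i. i \<noteq> 0) [1..int N] = [1..int N]" by (rule filter_True) auto
  ultimately show ?thesis by simp
qed

lemma idx_list:
  assumes "1 \<le> a" "a \<le> N"
  shows "filter (\<lambda>i. i \<noteq> int a) [0..int N] = [0..int a - 1] @ [int a + 1..int N]"
proof -
  have "[0..int N] = [0..int a - 1] @ [int a..int N]" using upto_split1[of 0 "int a" "int N"] assms by simp
  moreover have "[int a..int N] = int a # [int a + 1..int N]" using upto_rec1[of "int a" "int N"] assms by simp
  moreover have "filter (\<lambda>i. i \<noteq> int a) [0..int a - 1] = [0..int a - 1]" by (rule filter_True) auto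
  moreover have "filter (\<lambda>i. i \<noteq> int a) [int a + 1..int N] = [int a + 1..int N]" by (rule filter_True) auto
  ultimately show ?thesis by simp
qed

lemma idx_nth:
  assumes "1 \<le> a" "a \<le> N" "s < N"
  shows "filter (\<lambda>i. i \<noteq> int a) [0..int N] ! s = (if s < a then int s else int s + 1)"
    and "length (filter (\<lambda>i. i \<noteq> int a) [0..int N]) = N"
proof -
  have l1: "length [0..int a - 1] = a" by simp
  show "filter (\<lambda>i. i \<noteq> int a) [0..int N] ! s = (if s < a then int s else int s + 1)"
    unfolding idx_list[OF assms(1,2)]
  proof (cases "s < a")
    case True
    then show "([0..int a - 1] @ [int a + 1..int N]) ! s = (if s < a then int s else int s + 1)"
      by (simp add: nth_append)
  next
    case False
    then have "([0..int a - 1] @ [int a + 1..int N]) ! s = [int a + 1..int N] ! (s - a)"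
      by (simp add: nth_append)
    also have "\<dots> = int a + 1 + int (s - a)" using assms False by (intro nth_upto) simp
    finally show "([0..int a - 1] @ [int a + 1..int N]) ! s = (if s < a then int s else int s + 1)"
      using False by simp
  qed
  show "length (filter (\<lambda>i. i \<noteq> int a) [0..int N]) = N"
    unfolding idx_list[OF assms(1,2)] using assms by simp
qed

lemma cas_main:
  fixes w :: "nat \<Rightarrow> complex \<Rightarrow> 'f::field"
  assumes lin: "\<And>m. 1 \<le> m \<Longrightarrow> m \<le> N \<Longrightarrow> w m u = (\<Sum>t<N. c (Suc t) * w m (u + of_nat (Suc t)))"
    and a: "1 \<le> a" "a \<le> N"
  shows "casorati w (filter (\<lambda>i. i \<noteq> int a) [0..int N]) u = (-1)^(a - 1) * c a * casorati w [1..int N] u"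
proof -
  define A where "A = mat N N (\<lambda>(r, s). w (r + 1) (u + of_int ([1..int N] ! s)))"
  define x where "x = vec N (\<lambda>t. c (Suc t))"
  define B where "B = replace_col A (A *\<^sub>v x) (a - 1)"
  have Ac: "A \<in> carrier_mat N N" unfolding A_def by simp
  have xc: "x \<in> carrier_vec N" unfolding x_def by simp
  have Bc: "B \<in> carrier_mat N N" unfolding B_def replace_col_def using Ac by auto
  have a1: "a - 1 < N" using a by simp
  have Aent: "\<And>r s. r < N \<Longrightarrow> s < N \<Longrightarrow> A $$ (r, s) = w (r + 1) (u + of_nat (Suc s))"
    unfolding A_def by simp
  have Ax: "\<And>r. r < N \<Longrightarrow> (A *\<^sub>v x) $ r = w (r + 1) u"
  proof -
    fix r assume r: "r < N"
    have "(A *\<^sub>v x) $ r = (\<Sum>t<N. A $$ (r, t) * x $ t)"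
      using Ac xc r by (simp add: mult_mat_vec_def scalar_prod_def row_def lessThan_atLeast0)
    also have "\<dots> = (\<Sum>t<N. c (Suc t) * w (r + 1) (u + of_nat (Suc t)))"
      by (rule sum.cong) (simp_all add: Aent r x_def)
    also have "\<dots> = w (r + 1) u" using lin[of "r + 1"] r by simp
    finally show "(A *\<^sub>v x) $ r = w (r + 1) u" .
  qed
  have M: "mat N N (\<lambda>(r, s). w (r + 1) (u + of_int (filter (\<lambda>i. i \<noteq> int a) [0..int N] ! s)))
      = swap_col_to_front B (a - 1)"
    unfolding swap_col_to_front_result[OF Bc a1]
  proof (rule eq_matI)
    fix i j assume ij: "i < dim_row (mat N N (\<lambda>(i, j). if j = 0 then B $$ (i, a - 1) else if j \<le> a - 1 then B $$ (i, j - 1) else B $$ (i, j)))"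
      "j < dim_col (mat N N (\<lambda>(i, j). if j = 0 then B $$ (i, a - 1) else if j \<le> a - 1 then B $$ (i, j - 1) else B $$ (i, j)))"
    then have i: "i < N" and j: "j < N" by auto
    have Bent: "\<And>s. s < N \<Longrightarrow> B $$ (i, s) = (if s = a - 1 then w (i + 1) u else w (i + 1) (u + of_nat (Suc s)))"
      unfolding B_def replace_col_def using Ac i Ax Aent by auto
    show "mat N N (\<lambda>(r, s). w (r + 1) (u + of_int (filter (\<lambda>i. i \<noteq> int a) [0..int N] ! s))) $$ (i, j) =
       mat N N (\<lambda>(i, j). if j = 0 then B $$ (i, a - 1) else if j \<le> a - 1 then B $$ (i, j - 1) else B $$ (i, j)) $$ (i, j)"
      using i j a1 a by (auto simp: idx_nth[OF a j] Bent add.commute)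
  qed auto
  have "casorati w (filter (\<lambda>i. i \<noteq> int a) [0..int N]) u
      = det (mat N N (\<lambda>(r, s). w (r + 1) (u + of_int (filter (\<lambda>i. i \<noteq> int a) [0..int N] ! s))))"
  proof -
    have "0 < N" using a by simp
    then have len: "length (filter (\<lambda>i. i \<noteq> int a) [0..int N]) = N" using idx_nth(2)[OF a] by blast
    show ?thesis unfolding casorati_def len ..
  qed
  also have "\<dots> = (-1)^(a - 1) * det B" unfolding M by (rule swap_col_to_front_det[OF Bc a1])
  also have "det B = x $ (a - 1) * det A" unfolding B_def by (rule cramer_lemma_mat[OF Ac xc a1])
  also have "x $ (a - 1) = c a"
  proof -
    have "Suc (a - 1) = a" using a by simp
    then show ?thesis unfolding x_def using a1 by simp
  qed
  also have "det A = casorati w [1..int N] u" unfolding A_def casorati_def by simp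
  finally show ?thesis by simp
qed




theorem mainTheorem5:
  fixes n :: nat and Q :: "nat \<Rightarrow> complex \<Rightarrow> 'f::field" and w :: "nat \<Rightarrow> complex \<Rightarrow> 'f"
  assumes "n \<ge> 2"
    and "alg_indep_Z (\<lambda>(b, u). Q b u) ({1..n} \<times> UNIV)"
    and "\<And>m u. 1 \<le> m \<Longrightarrow> m \<le> 2 * n + 2 \<Longrightarrow> Lop n Q (w m) u = 0"
    and "\<And>u. casorati w [1..int (2 * n + 2)] u \<noteq> 0"
  shows "\<forall>a \<le> 2 * n + 2. \<forall>u.
           TT n Q a (u + of_nat a / 2) =
           casorati w (filter (\<lambda>i. i \<noteq> int a) [0..int (2 * n + 2)]) u
             / casorati w [1..int (2 * n + 2)] u"
proof (intro allI impI)
  fix a u assume a: "a \<le> 2 * n + 2"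
  define N where "N = 2 * n + 2"
  have n1: "1 \<le> n" using assms(1) by simp
  have nz: "\<And>b x. 1 \<le> b \<Longrightarrow> b \<le> n \<Longrightarrow> Q b x \<noteq> 0" using alg_nz[OF assms(2)] by blast
  have two: "(2::'f) \<noteq> 0" using alg_two[OF assms(2)] .
  have GN: "G n Q 1 (int N) u = -1"
  proof -
    have "TT n Q 0 (u + of_nat 0 / 2) = - G n Q 1 (int (2 * n + 2 - 0)) u"
      using T_eq[where Q=Q and n=n and a=0 and u=u, OF nz n1 two] by simp
    then have "- G n Q 1 (int N) u = 1" unfolding N_def by (simp add: TT_def)
    then show ?thesis by (metis minus_minus)
  qed
  define c where "c = (\<lambda>j::nat. (-1)^j * G n Q 1 (int N - int j) u)"
  have lin: "\<And>m. 1 \<le> m \<Longrightarrow> m \<le> N \<Longrightarrow> w m u = (\<Sum>t<N. c (Suc t) * w m (u + of_nat (Suc t)))"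
  proof -
    fix m assume m: "1 \<le> m" "m \<le> N"
    have "0 = Lop n Q (w m) u" using assms(3) m unfolding N_def by simp
    also have "\<dots> = (\<Sum>j\<le>N. (-1)^j * G n Q 1 (int N - int j) u * w m (u + of_nat j))"
      unfolding Lop_def Lpart_Ef G_def N_def by simp
    also have "\<dots> = (-1)^0 * G n Q 1 (int N - int 0) u * w m (u + of_nat 0)
        + (\<Sum>t\<le>2 * n + 1. (-1)^(Suc t) * G n Q 1 (int N - int (Suc t)) u * w m (u + of_nat (Suc t)))"
    proof -
      have e: "2 * n + 2 = Suc (2 * n + 1)" by simp
      show ?thesis unfolding N_def e by (rule sum.atMost_Suc_shift)
    qed
    also have "(\<Sum>t\<le>2 * n + 1. (-1)^(Suc t) * G n Q 1 (int N - int (Suc t)) u * w m (u + of_nat (Suc t)))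
        = (\<Sum>t<N. c (Suc t) * w m (u + of_nat (Suc t)))"
      unfolding N_def c_def by (simp add: lessThan_Suc_atMost[symmetric])
    finally show "w m u = (\<Sum>t<N. c (Suc t) * w m (u + of_nat (Suc t)))"
      using GN by simp
  qed
  have T: "TT n Q a (u + of_nat a / 2) = - G n Q 1 (int (N - a)) u"
    using T_eq[where Q=Q and n=n and u=u, OF nz n1 two a] unfolding N_def .
  have cz: "casorati w [1..int N] u \<noteq> 0" using assms(4) unfolding N_def .
  show "TT n Q a (u + of_nat a / 2) =
           casorati w (filter (\<lambda>i. i \<noteq> int a) [0..int (2 * n + 2)]) u
             / casorati w [1..int (2 * n + 2)] u"
    unfolding N_def[symmetric]
  proof (cases "a = 0")
    case True
    then show "TT n Q a (u + of_nat a / 2) =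
           casorati w (filter (\<lambda>i. i \<noteq> int a) [0..int N]) u / casorati w [1..int N] u"
      using cz idx_zero[of N] by (simp add: TT_def)
  next
    case False
    then have a1: "1 \<le> a" by simp
    have aN: "a \<le> N" using a unfolding N_def .
    have "casorati w (filter (\<lambda>i. i \<noteq> int a) [0..int N]) u = (-1)^(a - 1) * c a * casorati w [1..int N] u"
      by (rule cas_main[OF lin a1 aN])
    also have "(-1)^(a - 1) * c a = - G n Q 1 (int (N - a)) u"
    proof -
      obtain b where b: "a = Suc b" using a1 by (cases a) auto
      have p: "((-1::'f)^(a - 1)) * (-1)^a = -1"
        unfolding b by (simp add: power_mult_distrib[symmetric])
      have e: "int N - int a = int (N - a)" using aN by simp
      have "(-1)^(a - 1) * c a = (((-1::'f)^(a - 1)) * (-1)^a) * G n Q 1 (int N - int a) u"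
        unfolding c_def by (simp only: mult.assoc)
      then show ?thesis unfolding p e by simp
    qed
    finally show "TT n Q a (u + of_nat a / 2) =
           casorati w (filter (\<lambda>i. i \<noteq> int a) [0..int N]) u / casorati w [1..int N] u"
      using T cz by simp
  qed
qed


end
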